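(* Let $\mathcal{C}=\mathsf{CSS}(A,B)$ be a qudit CSS code on $n$ qudits and $H_A$ a parity-check matrix for $A$. If two columns of $H_A$ are identical, then either $\mathcal{C}$ has distance at most $2$, or swapping the two corresponding physical qudits acts as a logical identity on $\mathcal{C}$.
   Context: Let $q$ be a prime power. For classical codes $A,B\subseteq\mathbb{F}_q^n$ with full-row-rank parity-check matrices $H_A,H_B$ satisfying $H_AH_B^T=0$, $\mathsf{CSS}(A,B)$ is the qudit stabilizer code with $X$-type stabilizers the generalized Paulis $X^v$ ($v$ in the row space of $H_A$) and $Z$-type stabilizers $Z^w$ ($w$ in the row space of $H_B$). A logical identity is an operator acting as the identity on the codespace. *)

theory Defs
  imports "HOL-Analysis.Analysis" "HOL-Library.Extended_Nat"
begin

text \<open>Qudit states on n qudits (n = CARD('n)) of local dimension q = CARD('a):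
  functions from computational basis labels x in F_q^n to complex amplitudes.\<close>

text \<open>A nontrivial additive character of F_q (e.g. x maps to omega^tr(x)).\<close>
definition add_char :: "('a::field \<Rightarrow> complex) \<Rightarrow> bool" where
  "add_char ch \<longleftrightarrow> ch 0 = 1 \<and> (\<forall>x y. ch (x + y) = ch x * ch y) \<and> (\<exists>x. ch x \<noteq> 1)"

definition dotp :: "'a::semiring_1 ^ 'n \<Rightarrow> 'a ^ 'n \<Rightarrow> 'a" where
  "dotp a b = (\<Sum>i\<in>UNIV. a $ i * b $ i)"

text \<open>Generalized Paulis: X^a |x> = |x + a>,  Z^b |x> = ch(b.x) |x>.\<close>
definition pauliX :: "'a::ab_group_add ^ 'n \<Rightarrow> ('a ^ 'n \<Rightarrow> complex) \<Rightarrow> ('a ^ 'n \<Rightarrow> complex)" where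
  "pauliX a \<psi> = (\<lambda>x. \<psi> (x - a))"

definition pauliZ :: "('a::comm_ring_1 \<Rightarrow> complex) \<Rightarrow> 'a ^ 'n \<Rightarrow> ('a ^ 'n \<Rightarrow> complex) \<Rightarrow> ('a ^ 'n \<Rightarrow> complex)" where
  "pauliZ ch b \<psi> = (\<lambda>x. ch (dotp b x) * \<psi> x)"

definition pauli :: "('a::comm_ring_1 \<Rightarrow> complex) \<Rightarrow> complex \<Rightarrow> 'a ^ 'n \<Rightarrow> 'a ^ 'n
    \<Rightarrow> ('a ^ 'n \<Rightarrow> complex) \<Rightarrow> ('a ^ 'n \<Rightarrow> complex)" where
  "pauli ch c a b \<psi> = (\<lambda>x. c * pauliX a (pauliZ ch b \<psi>) x)"

definition pauli_weight :: "'a::zero ^ 'n \<Rightarrow> 'a ^ 'n \<Rightarrow> nat" where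
  "pauli_weight a b = card {i. a $ i \<noteq> 0 \<or> b $ i \<noteq> 0}"

definition row_space :: "'a::semiring_1 ^ 'n ^ 'm \<Rightarrow> ('a ^ 'n) set" where
  "row_space H = range (\<lambda>y. y v* H)"

definition full_row_rank :: "'a::semiring_1 ^ 'n ^ 'm \<Rightarrow> bool" where
  "full_row_rank H \<longleftrightarrow> (\<forall>y. y v* H = 0 \<longrightarrow> y = 0)"

definition css_gens :: "('a::comm_ring_1 \<Rightarrow> complex) \<Rightarrow> 'a ^ 'n ^ 'ma \<Rightarrow> 'a ^ 'n ^ 'mb
    \<Rightarrow> (('a ^ 'n \<Rightarrow> complex) \<Rightarrow> ('a ^ 'n \<Rightarrow> complex)) set" where
  "css_gens ch HA HB = {pauliX v | v. v \<in> row_space HA} \<union> {pauliZ ch w | w. w \<in> row_space HB}"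

inductive_set gen_group :: "('s \<Rightarrow> 's) set \<Rightarrow> ('s \<Rightarrow> 's) set" for G where
  gen_id: "id \<in> gen_group G"
| gen_mult: "g \<in> G \<Longrightarrow> s \<in> gen_group G \<Longrightarrow> g \<circ> s \<in> gen_group G"

definition css_codespace :: "('a::comm_ring_1 \<Rightarrow> complex) \<Rightarrow> 'a ^ 'n ^ 'ma \<Rightarrow> 'a ^ 'n ^ 'mb
    \<Rightarrow> ('a ^ 'n \<Rightarrow> complex) set" where
  "css_codespace ch HA HB = {\<psi>. \<forall>g\<in>css_gens ch HA HB. g \<psi> = \<psi>}"

definition nontrivial_logical :: "('a::comm_ring_1 \<Rightarrow> complex) \<Rightarrow> 'a ^ 'n ^ 'ma \<Rightarrow> 'a ^ 'n ^ 'mb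
    \<Rightarrow> complex \<Rightarrow> 'a ^ 'n \<Rightarrow> 'a ^ 'n \<Rightarrow> bool" where
  "nontrivial_logical ch HA HB c a b \<longleftrightarrow> c \<noteq> 0 \<and>
     (\<forall>s\<in>gen_group (css_gens ch HA HB). pauli ch c a b \<circ> s = s \<circ> pauli ch c a b) \<and>
     \<not> (\<exists>d s. s \<in> gen_group (css_gens ch HA HB) \<and> pauli ch c a b = (\<lambda>\<psi> x. d * s \<psi> x))"

text \<open>Distance: minimum weight of a nontrivial logical Pauli (infinity if none).\<close>
definition css_distance :: "('a::comm_ring_1 \<Rightarrow> complex) \<Rightarrow> 'a ^ 'n ^ 'ma \<Rightarrow> 'a ^ 'n ^ 'mb \<Rightarrow> enat" where
  "css_distance ch HA HB =
     (INF p \<in> {(c, a, b). nontrivial_logical ch HA HB c a b}. enat (pauli_weight (fst (snd p)) (snd (snd p))))"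

definition swap_qudits :: "'n \<Rightarrow> 'n \<Rightarrow> ('a ^ 'n \<Rightarrow> complex) \<Rightarrow> ('a ^ 'n \<Rightarrow> complex)" where
  "swap_qudits i j \<psi> = (\<lambda>x. \<psi> (\<chi> k. x $ (if k = i then j else if k = j then i else k)))"

definition logical_identity :: "(('s \<Rightarrow> complex) \<Rightarrow> ('s \<Rightarrow> complex)) \<Rightarrow> ('s \<Rightarrow> complex) set \<Rightarrow> bool" where
  "logical_identity U C \<longleftrightarrow> (\<forall>\<psi>\<in>C. U \<psi> = \<psi>)"

end

theory Submission imports Defs begin

lemma rs_add: "(a v* H) + (b v* H) = ((a + b) v* (H::'a::comm_ring_1^'n^'m))"
  by (simp add: vec_eq_iff vector_matrix_mult_def sum.distrib algebra_simps)
lemma rs_diff: "(a v* H) - (b v* H) = ((a - b) v* (H::'a::comm_ring_1^'n^'m))"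
  by (simp add: vec_eq_iff vector_matrix_mult_def sum_subtractf algebra_simps)
lemma rs_scale: "c *s (a v* H) = ((c *s a) v* (H::'a::comm_ring_1^'n^'m))"
  by (simp add: vec_eq_iff vector_matrix_mult_def sum_distrib_left algebra_simps)

lemma dotp_scale: "dotp w (c *s (x::'a::comm_ring_1^'n)) = c * dotp w x"
  by (simp add: dotp_def sum_distrib_left algebra_simps)

lemma dotp_add: "dotp w ((x::'a::comm_ring_1^'n) + y) = dotp w x + dotp w y"
  by (simp add: dotp_def sum.distrib algebra_simps)

lemma dotp_orth:
  fixes HA :: "'a::comm_ring_1 ^ 'n::finite ^ 'ma::finite" and HB :: "'a ^ 'n ^ 'mb::finite"
  assumes "HA ** transpose HB = 0"
  shows "dotp (b v* HB) (a v* HA) = 0"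
proof -
  have z: "\<And>r p. (\<Sum>k\<in>UNIV. HA$r$k * HB$p$k) = 0"
  proof -
    fix r p
    have "(HA ** transpose HB)$r$p = 0" using assms by simp
    thus "(\<Sum>k\<in>UNIV. HA$r$k * HB$p$k) = 0"
      by (simp add: matrix_matrix_mult_def transpose_def)
  qed
  have "dotp (b v* HB) (a v* HA) = (\<Sum>k\<in>UNIV. (\<Sum>p\<in>UNIV. b$p * HB$p$k) * (\<Sum>r\<in>UNIV. a$r * HA$r$k))"
    by (simp add: dotp_def vector_matrix_mult_def)
  also have "\<dots> = (\<Sum>k\<in>UNIV. \<Sum>p\<in>UNIV. \<Sum>r\<in>UNIV. b$p * a$r * (HA$r$k * HB$p$k))"
    unfolding sum_product by (intro sum.cong refl) (simp add: mult_ac)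
  also have "\<dots> = (\<Sum>p\<in>UNIV. \<Sum>k\<in>UNIV. \<Sum>r\<in>UNIV. b$p * a$r * (HA$r$k * HB$p$k))"
    by (rule sum.swap)
  also have "\<dots> = (\<Sum>p\<in>UNIV. \<Sum>r\<in>UNIV. \<Sum>k\<in>UNIV. b$p * a$r * (HA$r$k * HB$p$k))"
    by (intro sum.cong refl) (rule sum.swap)
  also have "\<dots> = (\<Sum>p\<in>UNIV. \<Sum>r\<in>UNIV. b$p * a$r * (\<Sum>k\<in>UNIV. HA$r$k * HB$p$k))"
    by (simp add: sum_distrib_left)
  also have "\<dots> = 0" by (simp add: z)
  finally show ?thesis .
qed


lemma dotp_scale_left: "dotp (c *s w) (x::'a::comm_ring_1^'n) = c * dotp w x"
  by (simp add: dotp_def sum_distrib_left algebra_simps)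

lemma dotp_zero_right [simp]: "dotp w (0::'a::comm_ring_1^'n) = 0"
  by (simp add: dotp_def)

lemma rs_closed_add: "u \<in> row_space H \<Longrightarrow> v \<in> row_space H \<Longrightarrow> u + v \<in> row_space (H::'a::comm_ring_1^'n^'m)"
  unfolding row_space_def by (auto simp: rs_add)
lemma rs_closed_diff: "u \<in> row_space H \<Longrightarrow> v \<in> row_space H \<Longrightarrow> u - v \<in> row_space (H::'a::comm_ring_1^'n^'m)"
  unfolding row_space_def by (auto simp: rs_diff)
lemma rs_zero: "0 \<in> row_space (H::'a::comm_ring_1^'n^'m)"
  unfolding row_space_def by (auto intro: range_eqI[of _ _ 0])

lemma gen_group_fix:
  assumes "s \<in> gen_group G" and "\<And>g. g \<in> G \<Longrightarrow> g \<psi> = \<psi>"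
  shows "s \<psi> = \<psi>"
  using assms by (induction rule: gen_group.induct) auto

lemma gen_group_comm:
  assumes "s \<in> gen_group G" and "\<And>g. g \<in> G \<Longrightarrow> P \<circ> g = g \<circ> P"
  shows "P \<circ> s = s \<circ> P"
  using assms
proof (induction rule: gen_group.induct)
  case gen_id then show ?case by simp
next
  case (gen_mult g s)
  have h1: "\<And>a. P (g a) = g (P a)" using gen_mult by (metis comp_apply)
  have h2: "\<And>a. P (s a) = s (P a)" using gen_mult by (metis comp_apply)
  show ?case by (simp add: fun_eq_iff h1 h2)
qed

theorem lemma3:
  fixes HA :: "'a::{field,finite} ^ 'n::finite ^ 'ma::finite"
    and HB :: "'a ^ 'n ^ 'mb::finite"
    and ch :: "'a \<Rightarrow> complex"
    and i j :: 'n
  assumes "add_char ch"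
    and "full_row_rank HA" and "full_row_rank HB"
    and "HA ** transpose HB = 0"
    and "i \<noteq> j" and "column i HA = column j HA"
  shows "css_distance ch HA HB \<le> 2 \<or>
         logical_identity (swap_qudits i j) (css_codespace ch HA HB)"
proof -
  have ch0: "ch 0 = 1" using assms(1) by (simp add: add_char_def)
  obtain s0 where s0: "ch s0 \<noteq> 1" using assms(1) by (auto simp: add_char_def)
  have colij: "\<And>r. HA$r$i = HA$r$j"
  proof -
    fix r show "HA$r$i = HA$r$j" using assms(6) by (simp add: column_def vec_eq_iff)
  qed
  have rowA: "v$i = v$j" if vin: "v \<in> row_space HA" for v
  proof -
    obtain a where "v = a v* HA" using vin unfolding row_space_def by blast
    then show ?thesis by (simp add: vector_matrix_mult_def colij)
  qed
  define e :: "'a ^ 'n" where "e = (\<chi> k. if k = i then 1 else if k = j then -1 else 0)"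
  have dote: "dotp e y = y$i - y$j" for y
  proof -
    have "\<And>k. e$k * y$k = (if k = i then y$i else 0) - (if k = j then y$j else 0)"
      using assms(5) by (simp add: e_def)
    then have "dotp e y = (\<Sum>k\<in>UNIV. (if k = i then y$i else 0) - (if k = j then y$j else 0))"
      by (simp add: dotp_def)
    also have "\<dots> = y$i - y$j" by (simp add: sum_subtractf)
    finally show ?thesis .
  qed
  define perp where "perp y = (\<forall>w\<in>row_space HB. dotp w y = 0)" for y
  define phi :: "'a ^ 'n \<Rightarrow> 'a ^ 'n \<Rightarrow> complex"
    where "phi y = (\<lambda>z. if z - y \<in> row_space HA then 1 else 0)" for y
  have phi_code: "phi y \<in> css_codespace ch HA HB" if py: "perp y" for y
    unfolding css_codespace_def css_gens_def
  proof (intro CollectI ballI, elim UnE CollectE exE conjE)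
    fix g v assume g: "g = pauliX v" and v: "v \<in> row_space HA"
    have "(z - v - y \<in> row_space HA) = (z - y \<in> row_space HA)" for z
    proof
      assume "z - v - y \<in> row_space HA"
      from rs_closed_add[OF this v] show "z - y \<in> row_space HA" by (simp add: algebra_simps)
    next
      assume "z - y \<in> row_space HA"
      from rs_closed_diff[OF this v] show "z - v - y \<in> row_space HA" by (simp add: algebra_simps)
    qed
    then show "g (phi y) = phi y" by (simp add: g pauliX_def phi_def)
  next
    fix g w assume g: "g = pauliZ ch w" and w: "w \<in> row_space HB"
    have "ch (dotp w z) = 1" if z: "z - y \<in> row_space HA" for z
    proof -
      obtain a where a: "z - y = a v* HA" using z unfolding row_space_def by blast
      obtain b where b: "w = b v* HB" using w unfolding row_space_def by blast
      have "z = y + (z - y)" by simp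
      then have "dotp w z = dotp w y + dotp w (z - y)" by (metis dotp_add)
      also have "\<dots> = 0" using py w dotp_orth[OF assms(4)] a b by (simp add: perp_def)
      finally show ?thesis by (simp add: ch0)
    qed
    then show "g (phi y) = phi y" by (auto simp: g pauliZ_def phi_def)
  qed
  have supp: "perp x" if psi: "\<psi> \<in> css_codespace ch HA HB" and nz: "\<psi> x \<noteq> 0" for \<psi> x
    unfolding perp_def
  proof (rule ballI, rule ccontr)
    fix w assume w: "w \<in> row_space HB" and u: "dotp w x \<noteq> 0"
    obtain b where b: "w = b v* HB" using w unfolding row_space_def by blast
    define w' where "w' = (s0 / dotp w x) *s w"
    have "w' = ((s0 / dotp w x) *s b) v* HB" by (simp add: w'_def b rs_scale)
    then have "w' \<in> row_space HB" by (simp add: row_space_def)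
    then have "pauliZ ch w' \<psi> = \<psi>" using psi by (auto simp: css_codespace_def css_gens_def)
    then have "ch (dotp w' x) * \<psi> x = \<psi> x" by (metis pauliZ_def)
    with nz have "ch (dotp w' x) = 1" by simp
    moreover have "dotp w' x = s0" using u by (simp add: w'_def dotp_scale_left)
    ultimately show False using s0 by simp
  qed
  have P_eq: "pauli ch 1 0 e = pauliZ ch e"
    by (intro ext) (simp add: pauli_def pauliX_def)
  show ?thesis
  proof (cases "\<exists>\<psi>\<in>css_codespace ch HA HB. \<exists>x. x$i \<noteq> x$j \<and> \<psi> x \<noteq> 0")
    case True
    then obtain \<psi> x where psi: "\<psi> \<in> css_codespace ch HA HB" and xij: "x$i \<noteq> x$j" and nz: "\<psi> x \<noteq> 0"
      by blast
    have px: "perp x" using supp[OF psi nz] .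
    have comm: "pauliZ ch e \<circ> g = g \<circ> pauliZ ch e" if "g \<in> css_gens ch HA HB" for g
      using that unfolding css_gens_def
    proof (elim UnE CollectE exE conjE)
      fix v assume g: "g = pauliX v" and v: "v \<in> row_space HA"
      have "dotp e (x - v) = dotp e x" for x using rowA[OF v] by (simp add: dote)
      then show ?thesis by (intro ext) (simp add: g pauliX_def pauliZ_def)
    next
      fix w assume g: "g = pauliZ ch w"
      show ?thesis by (intro ext) (simp add: g pauliZ_def)
    qed
    have ntl: "nontrivial_logical ch HA HB 1 0 e"
      unfolding nontrivial_logical_def P_eq
    proof (intro conjI ballI)
      show "(1::complex) \<noteq> 0" by simp
    next
      fix s assume "s \<in> gen_group (css_gens ch HA HB)"
      then show "pauliZ ch e \<circ> s = s \<circ> pauliZ ch e" using gen_group_comm comm by blast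
    next
      show "\<not> (\<exists>d s. s \<in> gen_group (css_gens ch HA HB) \<and> pauliZ ch e = (\<lambda>\<psi> x. d * s \<psi> x))"
      proof
      assume "\<exists>d s. s \<in> gen_group (css_gens ch HA HB) \<and> pauliZ ch e = (\<lambda>\<psi> x. d * s \<psi> x)"
      then obtain d s where s: "s \<in> gen_group (css_gens ch HA HB)"
        and eq: "pauliZ ch e = (\<lambda>\<psi> x. d * s \<psi> x)" by blast
      have key: "ch (dotp e y) = d" if "perp y" for y
      proof -
        have "s (phi y) = phi y"
          using gen_group_fix[OF s] phi_code[OF that] by (auto simp: css_codespace_def)
        moreover have "pauliZ ch e (phi y) y = d * s (phi y) y" using eq by metis
        ultimately show ?thesis by (simp add: pauliZ_def phi_def rs_zero)
      qed
      have "perp 0" by (simp add: perp_def)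
      from key[OF this] have d1: "d = 1" by (simp add: ch0)
      define t where "t = x$i - x$j"
      have t: "t \<noteq> 0" using xij by (simp add: t_def)
      have "perp ((s0 / t) *s x)" using px by (simp add: perp_def dotp_scale)
      have "dotp e ((s0 / t) *s x) = (s0 / t) * t"
        unfolding dote t_def by (simp only: vector_smult_component right_diff_distrib)
      also have "\<dots> = s0" using t by simp
      finally have "dotp e ((s0 / t) *s x) = s0" .
      with key[OF \<open>perp ((s0 / t) *s x)\<close>] have "ch s0 = 1" using d1 by simp
      with s0 show False by simp
      qed
    qed
    have wt: "pauli_weight (0::'a^'n) e = 2"
    proof -
      have "{k. (0::'a^'n)$k \<noteq> 0 \<or> e$k \<noteq> 0} = {i, j}" using assms(5) by (auto simp: e_def)
      then show ?thesis using assms(5) by (simp add: pauli_weight_def)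
    qed
    have "css_distance ch HA HB \<le> enat (pauli_weight (fst (snd (1::complex, 0::'a^'n, e))) (snd (snd (1::complex, 0::'a^'n, e))))"
      unfolding css_distance_def by (rule INF_lower) (simp add: ntl)
    then have "css_distance ch HA HB \<le> 2" using wt by (simp add: numeral_eq_enat)
    then show ?thesis by simp
  next
    case False
    have "swap_qudits i j \<psi> = \<psi>" if psi: "\<psi> \<in> css_codespace ch HA HB" for \<psi>
    proof (rule ext)
      fix x :: "'a ^ 'n"
      define y :: "'a ^ 'n" where "y = (\<chi> k. x $ (if k = i then j else if k = j then i else k))"
      have "\<psi> y = \<psi> x"
      proof (cases "x$i = x$j")
        case True
        then have "y = x" by (simp add: y_def vec_eq_iff)
        then show ?thesis by simp
      next
        case xne: False
        have "y$i \<noteq> y$j" using xne assms(5) by (simp add: y_def)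
        then have "\<psi> y = 0" using False psi by blast
        moreover have "\<psi> x = 0" using False psi xne by blast
        ultimately show ?thesis by simp
      qed
      then show "swap_qudits i j \<psi> x = \<psi> x" by (simp add: swap_qudits_def y_def)
    qed
    then show ?thesis by (simp add: logical_identity_def)
  qed
qed

end
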